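(* Let $L\subseteq Q$ be an extension of Lie algebras over $\Phi$ such that $Q$ is a weak algebra of quotients of $L$ and $L$ is strongly non-degenerate. Then: (i) $Q$ is strongly non-degenerate; (ii) $\mathrm{Ann}_Q(L)=\mathrm{QAnn}_Q(L)=0$.
   Context: $\Phi$ is a unital commutative ring in which $2$ and $3$ are invertible; all algebras are $\Phi$-modules. An extension of Lie algebras $L\subseteq Q$ means $L$ is a Lie subalgebra of $Q$. $Q$ is a weak algebra of quotients of $L$ if for every non-zero $q\in Q$ there exists $x\in L$ with $0\neq [x,q]\in L$. An element $x$ of a Lie algebra $M$ is an absolute zero divisor if $[x,[x,M]]=0$; $M$ is strongly non-degenerate if it has no non-zero absolute zero divisors. For subsets $X,Y$ of a Lie algebra, $\mathrm{Ann}_X(Y)=\{x\in X: [x,Y]=0\}$ and $\mathrm{QAnn}_X(Y)=\{x\in X: [x,[x,Y]]=0\}$. *)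

theory Defs
  imports Complex_Main
begin

text \<open>A Lie algebra over the commutative ring 'r (playing the role of Phi):
  the carrier is the whole type 'q, a module via scale, with bracket br.\<close>
definition lie_algebra :: "('r::comm_ring_1 \<Rightarrow> 'q::ab_group_add \<Rightarrow> 'q) \<Rightarrow> ('q \<Rightarrow> 'q \<Rightarrow> 'q) \<Rightarrow> bool" where
  "lie_algebra scale br \<longleftrightarrow>
     module scale \<and>
     (\<forall>x y z. br (x + y) z = br x z + br y z) \<and>
     (\<forall>x y z. br x (y + z) = br x y + br x z) \<and>
     (\<forall>a x y. br (scale a x) y = scale a (br x y)) \<and>
     (\<forall>a x y. br x (scale a y) = scale a (br x y)) \<and>
     (\<forall>x. br x x = 0) \<and>
     (\<forall>x y z. br x (br y z) + br y (br z x) + br z (br x y) = 0)"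

definition lie_subalgebra :: "('r::comm_ring_1 \<Rightarrow> 'q::ab_group_add \<Rightarrow> 'q) \<Rightarrow> ('q \<Rightarrow> 'q \<Rightarrow> 'q) \<Rightarrow> 'q set \<Rightarrow> bool" where
  "lie_subalgebra scale br L \<longleftrightarrow>
     module.subspace scale L \<and> (\<forall>x\<in>L. \<forall>y\<in>L. br x y \<in> L)"

definition weak_algebra_of_quotients :: "('q::ab_group_add \<Rightarrow> 'q \<Rightarrow> 'q) \<Rightarrow> 'q set \<Rightarrow> bool" where
  "weak_algebra_of_quotients br L \<longleftrightarrow>
     (\<forall>q. q \<noteq> 0 \<longrightarrow> (\<exists>x\<in>L. br x q \<noteq> 0 \<and> br x q \<in> L))"

definition absolute_zero_divisor :: "('q::ab_group_add \<Rightarrow> 'q \<Rightarrow> 'q) \<Rightarrow> 'q set \<Rightarrow> 'q \<Rightarrow> bool" where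
  "absolute_zero_divisor br M x \<longleftrightarrow> x \<in> M \<and> (\<forall>y\<in>M. br x (br x y) = 0)"

definition strongly_non_degenerate :: "('q::ab_group_add \<Rightarrow> 'q \<Rightarrow> 'q) \<Rightarrow> 'q set \<Rightarrow> bool" where
  "strongly_non_degenerate br M \<longleftrightarrow> (\<forall>x. absolute_zero_divisor br M x \<longrightarrow> x = 0)"

definition Ann :: "('q \<Rightarrow> 'q \<Rightarrow> 'q::zero) \<Rightarrow> 'q set \<Rightarrow> 'q set \<Rightarrow> 'q set" where
  "Ann br X Y = {x \<in> X. \<forall>y\<in>Y. br x y = 0}"

definition QAnn :: "('q \<Rightarrow> 'q \<Rightarrow> 'q::zero) \<Rightarrow> 'q set \<Rightarrow> 'q set \<Rightarrow> 'q set" where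
  "QAnn br X Y = {x \<in> X. \<forall>y\<in>Y. br x (br x y) = 0}"

end

theory Submission
  imports Defs
begin

locale lieL =
  fixes br :: "'q::ab_group_add \<Rightarrow> 'q \<Rightarrow> 'q" and L :: "'q set"
  assumes add_l: "br (x + y) z = br x z + br y z"
    and add_r: "br x (y + z) = br x y + br x z"
    and alt: "br x x = 0"
    and jac: "br x (br y z) + br y (br z x) + br z (br x y) = 0"
    and half: "v + v = 0 \<Longrightarrow> v = 0"
    and third: "v + v + v = 0 \<Longrightarrow> v = 0"
    and L0: "0 \<in> L" and Ladd: "u \<in> L \<Longrightarrow> v \<in> L \<Longrightarrow> u + v \<in> L"
    and Lneg: "u \<in> L \<Longrightarrow> - u \<in> L"
    and Lbr: "u \<in> L \<Longrightarrow> v \<in> L \<Longrightarrow> br u v \<in> L"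
    and snd: "x \<in> L \<Longrightarrow> (\<And>v. v \<in> L \<Longrightarrow> br x (br x v) = 0) \<Longrightarrow> x = 0"
begin

lemma zero_l[simp]: "br 0 z = 0"
  using add_l[of 0 0 z] by simp
lemma zero_r[simp]: "br z 0 = 0"
  using add_r[of z 0 0] by simp
lemma minus_l: "br (- x) z = - br x z"
  using add_l[of x "-x" z] by (simp add: eq_neg_iff_add_eq_0 add.commute)
lemma minus_r: "br z (- x) = - br z x"
  using add_r[of z x "-x"] by (simp add: eq_neg_iff_add_eq_0 add.commute)
lemma diff_l: "br (x - y) z = br x z - br y z"
  by (simp only: diff_conv_add_uminus add_l minus_l)
lemma diff_r: "br z (x - y) = br z x - br z y"
  by (simp only: diff_conv_add_uminus add_r minus_r)
lemma anti: "br x y = - br y x"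
proof -
  have "br (x+y) (x+y) = 0" by (rule alt)
  hence "br x x + br y x + (br x y + br y y) = 0" by (simp add: add_l add_r)
  hence "br x y + br y x = 0" by (simp add: alt add.commute)
  thus ?thesis by (simp add: eq_neg_iff_add_eq_0)
qed
lemma jac_l: "br (br x y) z = br x (br y z) - br y (br x z)"
  using jac[of x y z] anti[of z "br x y"] anti[of "br z x" y] anti[of z x]
  by (simp add: minus_r algebra_simps)
lemma der: "br z (br u v) = br (br z u) v + br u (br z v)"
  by (simp add: jac_l)

lemmas ws = jac_l add_l add_r minus_l minus_r diff_l diff_r

lemma Ldiff: "u \<in> L \<Longrightarrow> v \<in> L \<Longrightarrow> u - v \<in> L"
  using Ladd Lneg by (metis diff_conv_add_uminus)

lemmas Lc[simp] = L0 Ladd Lneg Lbr Ldiff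

end

locale lieQ = lieL +
  fixes q assumes HQ: "u \<in> L \<Longrightarrow> br q (br q u) = 0"
begin
lemma R1: assumes "u \<in> L" "v \<in> L" shows "br (br q u) (br q v) = 0"
proof -
  have "br q (br q (br u v)) = 0" using assms by (simp add: HQ)
  also have "br q (br q (br u v)) = br (br q (br q u)) v + br (br q u) (br q v) + (br (br q u) (br q v) + br u (br q (br q v)))"
    by (simp add: der[of q u v] add_r der[of q "br q u" v] der[of q u "br q v"])
  finally have "br (br q u) (br q v) + br (br q u) (br q v) = 0" using assms HQ by (simp add: add.assoc)
  thus ?thesis by (rule half)
qed
end


locale pairL = lieQ +
  fixes y s assumes y: "y \<in> L" and s: "s \<in> L" and Dy: "br q y = s"
begin
lemma P0: "br q s = 0" using HQ[OF y] Dy by simp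
lemma P1a: "u \<in> L \<Longrightarrow> br s (br q u) = 0" using R1[OF y] Dy by simp
lemma P1b: "u \<in> L \<Longrightarrow> br q (br s u) = 0"
  by (simp add: der[of q s u] P0 P1a)
lemma P2': "m \<in> L \<Longrightarrow> br s (br y (br q m)) = - br s (br s m)"
proof -
  assume m: "m \<in> L"
  have "br q (br y m) = br s m + br y (br q m)" by (simp add: der[of q y m] Dy)
  hence "br y (br q m) = br q (br y m) - br s m" by (simp add: algebra_simps)
  hence "br s (br y (br q m)) = br s (br q (br y m)) - br s (br s m)" by (simp add: diff_r)
  thus ?thesis using P1a[of "br y m"] m y by simp
qed
lemma P2: "u \<in> L \<Longrightarrow> br s (br s u) = br q (br y (br s u))"
  by (simp add: der[of q y "br s u"] Dy P1b)
lemma P2'': "u \<in> L \<Longrightarrow> br s (br s u) = - br (br s y) (br q u)"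
  by (simp add: jac_l P2' P1a)
lemma W1: "u \<in> L \<Longrightarrow> br s (br s (br s u)) = 0"
  using P2'[of "br s u"] P1b[of u] s by simp
lemma I1: "u \<in> L \<Longrightarrow> br s (br y (br s (br s u))) = - br s (br s (br y (br s u)))"
  using P2[of u] P2'[of "br y (br s u)"] s y by simp

lemma J0: assumes u: "u \<in> L"
  shows "br s (br y (br s (br s u))) = br s (br s (br y (br s u)))"
proof -
  have "br (br s (br s (br s y))) u = 0" using W1[OF y] by simp
  hence "br s (br s (br s (br y u))) - br s (br s (br y (br s u))) - (br s (br s (br y (br s u))) - br s (br y (br s (br s u))))
     - (br s (br s (br y (br s u))) - br s (br y (br s (br s u))) - (br s (br y (br s (br s u))) - br y (br s (br s (br s u))))) = 0"
    by (simp only: ws)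
  hence "(br s (br y (br s (br s u))) - br s (br s (br y (br s u)))) + (br s (br y (br s (br s u))) - br s (br s (br y (br s u))))
     + (br s (br y (br s (br s u))) - br s (br s (br y (br s u)))) = 0"
    using W1[of "br y u"] W1[OF u] u y by (simp add: algebra_simps)
  hence "br s (br y (br s (br s u))) - br s (br s (br y (br s u))) = 0" by (rule third)
  thus ?thesis by simp
qed
lemma W2: "u \<in> L \<Longrightarrow> br s (br s (br y (br s u))) = 0"
proof -
  assume u: "u \<in> L"
  have "br s (br s (br y (br s u))) + br s (br s (br y (br s u))) = 0"
    using J0[OF u] I1[OF u] by (metis add.right_inverse diff_minus_eq_add diff_self minus_diff_eq)
  thus ?thesis by (rule half)
qed
lemma W3: "u \<in> L \<Longrightarrow> br s (br y (br s (br s u))) = 0"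
  using J0 W2 by simp

lemma key: assumes v: "v \<in> L" shows "br s (br s (br y (br y (br s (br s v))))) = 0"
proof -
  have "br (br s (br s (br y (br s y)))) (br s v) = 0" using W2[OF y] by simp
  thus ?thesis using v y s by (simp only: ws) (simp add: W1 W2 W3 algebra_simps)
qed
lemma Qc: assumes v: "v \<in> L" shows "br (br s (br s y)) (br (br s (br s y)) v) = 0"
  using v y s by (simp only: ws) (simp add: W1 W2 W3 key algebra_simps)
lemma C: "br s (br s y) = 0"
proof (rule snd)
  show "br s (br s y) \<in> L" using y s by simp
  fix v assume "v \<in> L" thus "br (br s (br s y)) (br (br s (br s y)) v) = 0" by (rule Qc)
qed

lemma F1: "u \<in> L \<Longrightarrow> br (br s y) (br s (br s u)) = 0"
  using y s by (simp add: jac_l W1 W3)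
lemma F3: assumes k: "k \<in> L" "br q k = 0" shows "br s (br s k) = 0"
proof -
  interpret pk: pairL br L q "y + k" s
    using k y s Dy by unfold_locales (auto simp: HQ add_r)
  have "br s (br s (y + k)) = 0" by (rule pk.C)
  thus ?thesis using C by (simp add: add_r)
qed
lemma Dm: "u \<in> L \<Longrightarrow> br q (br (br s y) u) = - br s (br s u)"
proof -
  assume u: "u \<in> L"
  have "br q (br (br s y) u) = br (br q (br s y)) u + br (br s y) (br q u)" by (rule der)
  also have "br q (br s y) = 0" using P1b y by simp
  finally show ?thesis using P2''[OF u] by simp
qed
lemma step1: assumes u: "u \<in> L" shows "br (br s (br s u)) (br s u) = 0"
proof -
  define p where "p = br s (br s u)"
  define m1 where "m1 = br s u"
  define g where "g = br p m1"
  define e where "e = br s y"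
  define m where "m = br e u"
  have L: "p \<in> L" "m1 \<in> L" "e \<in> L" "m \<in> L" using u y s by (auto simp: p_def m1_def e_def m_def)
  have h1: "br s (br s (br u m1)) = br p m1 + (br m1 p + br m1 p) + br u (br s (br s m1))"
    by (simp add: p_def m1_def ws algebra_simps)
  have h2: "br u (br s (br s m1)) = 0" using W1[OF u] by (simp add: m1_def)
  have h3: "br m1 p = - g" by (simp add: g_def anti[of m1 p])
  have A: "br s (br s (br u m1)) = - g" using h1 h2 h3 by (simp add: g_def)
  have h4: "br s (br s (br u m1)) = - br e (br q (br u m1))" using P2''[of "br u m1"] L u by (simp add: e_def)
  have h5: "br q (br u m1) = br (br q u) m1" using der[of q u m1] P1b[OF u] by (simp add: m1_def)
  have g1: "g = br e (br (br q u) m1)" using A h4 h5 by simp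
  have h6: "br e (br (br q u) m1) = br (br e (br q u)) m1 + br (br q u) (br e m1)" by (rule der)
  have h7: "br e (br q u) = - p" using P2''[OF u] by (simp add: p_def e_def)
  have h8: "br e m1 = br s m"
  proof -
    have "br e m1 = br (br e s) u + br s (br e u)" unfolding m1_def by (rule der)
    moreover have "br e s = 0" using anti[of "br s y" s] C by (simp add: e_def)
    ultimately show ?thesis by (simp add: m_def)
  qed
  have h9: "br (br q u) (br s m) = br s (br (br q u) m)"
  proof -
    have "br (br q u) (br s m) = br (br (br q u) s) m + br s (br (br q u) m)" by (rule der)
    moreover have "br (br q u) s = 0" using anti[of "br q u" s] P1a[OF u] by simp
    ultimately show ?thesis by simp
  qed
  have h10: "br (br q u) m = br q (br u m) + br u p"
  proof -
    have "br q (br u m) = br (br q u) m + br u (br q m)" by (rule der)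
    moreover have "br q m = - p" using Dm[OF u] by (simp add: m_def e_def p_def)
    ultimately show ?thesis by (simp add: minus_r)
  qed
  have h11: "br s (br q (br u m)) = 0" using P1a L u by simp
  have h12: "br s (br u p) = - g"
  proof -
    have "br s (br u p) = br (br s u) p + br u (br s p)" by (rule der)
    moreover have "br s p = 0" using W1[OF u] by (simp add: p_def)
    ultimately show ?thesis using h3 by (simp add: m1_def)
  qed
  have t1: "br (br q u) (br e m1) = - g" using h8 h9 h10 h11 h12 by (simp add: add_r)
  have t2: "br (br e (br q u)) m1 = - g" using h7 by (simp add: minus_l g_def)
  have "g = - g + - g" using g1 h6 t1 t2 by simp
  hence "g + g + g = 0" by (simp add: algebra_simps)
  hence "g = 0" by (rule third)
  thus ?thesis by (simp add: g_def p_def m1_def)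
qed

lemma step2: assumes u: "u \<in> L" and v: "v \<in> L"
  shows "br (br s (br s u)) (br (br s (br s u)) v) = 0"
proof -
  define p where "p = br s (br s u)"
  define p' where "p' = br s (br s v)"
  define e where "e = br s y"
  define w where "w = br e u"
  define k where "k = br p u"
  have L: "p \<in> L" "p' \<in> L" "e \<in> L" "w \<in> L" "k \<in> L" using u v y s
    by (auto simp: p_def p'_def e_def w_def k_def)
  have Dw: "br q w = - p" using Dm[OF u] by (simp add: w_def e_def p_def)
  have Dv': "br q (br e v) = - p'" using Dm[OF v] by (simp add: e_def p'_def)
  interpret pw: pairL br L q w "- p"
    using L Dw by unfold_locales auto
  have Q: "br p (br p v) = br (br p w) (br q v)"
    using pw.P2''[OF v] by (simp add: minus_l minus_r)
  have c1: "br (br p w) (br q v) = br p (br w (br q v))"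
  proof -
    have "br p (br q v) = 0" using pw.P1a[OF v] by (simp add: minus_l)
    thus ?thesis by (simp add: jac_l)
  qed
  have c2: "br w (br q v) = br e (br u (br q v)) + br u p'"
  proof -
    have "br w (br q v) = br e (br u (br q v)) - br u (br e (br q v))" by (simp add: w_def jac_l)
    moreover have "br e (br q v) = - p'" using P2''[OF v] by (simp add: e_def p'_def)
    ultimately show ?thesis by (simp add: minus_r)
  qed
  have c3: "br p (br e (br u (br q v))) = br e (br p (br u (br q v)))"
  proof -
    have "br p e = 0" using F1[OF u] anti[of p e] by (simp add: p_def e_def)
    thus ?thesis by (simp add: der[of p e])
  qed
  have c4: "br p (br u (br q v)) = br k (br q v)"
  proof -
    have "br p (br q v) = 0" using pw.P1a[OF v] by (simp add: minus_l)
    thus ?thesis by (simp add: der[of p u] k_def)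
  qed
  have Dk: "br q k = 0"
  proof -
    have "br q p = 0" using pw.P0 by (simp add: minus_r)
    moreover have "br p (br q u) = 0" using pw.P1a[OF u] by (simp add: minus_l)
    ultimately show ?thesis by (simp add: k_def der[of q p u])
  qed
  have c6: "br k (br q v) = br q (br k v)" using Dk by (simp add: der[of q k v])
  have c7: "br e (br q (br k v)) = - br s (br s (br k v))" using P2''[of "br k v"] L v by (simp add: e_def)
  have c8: "br s (br s (br k v)) = br (br s (br s k)) v + (br (br s k) (br s v) + br (br s k) (br s v)) + br k (br s (br s v))"
    by (simp add: ws algebra_simps)
  have A2k: "br s (br s k) = 0" using F3[OF L(5) Dk] .
  have Ak: "br s k = 0"
  proof -
    have "br s k = br (br s p) u + br p (br s u)" unfolding k_def by (rule der)
    moreover have "br s p = 0" using W1[OF u] by (simp add: p_def)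
    moreover have "br p (br s u) = 0" using step1[OF u] by (simp add: p_def)
    ultimately show ?thesis by simp
  qed
  have pp: "br p p' = 0"
  proof -
    have "br (br q w) (br q (br e v)) = 0" using R1 L v by simp
    thus ?thesis using Dw Dv' by (simp add: minus_l minus_r)
  qed
  have kp: "br k p' = br p (br u p')" using pp by (simp add: k_def jac_l)
  have "br p (br p v) = - br k p' + br p (br u p')"
    using Q c1 c2 c3 c4 c6 c7 c8 A2k Ak by (simp add: add_r minus_r p'_def)
  thus ?thesis using kp by (simp add: p_def)
qed
lemma final: "s = 0"
proof (rule snd[OF s])
  fix u assume u: "u \<in> L"
  show "br s (br s u) = 0"
  proof (rule snd)
    show "br s (br s u) \<in> L" using u s by simp
    fix v assume "v \<in> L" thus "br (br s (br s u)) (br (br s (br s u)) v) = 0" using step2[OF u] by blast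
  qed
qed
end

lemma (in lieQ) qzero: assumes weak: "weak_algebra_of_quotients br L" shows "q = 0"
proof (rule ccontr)
  assume "q \<noteq> 0"
  then obtain x where x: "x \<in> L" "br x q \<noteq> 0" "br x q \<in> L"
    using weak unfolding weak_algebra_of_quotients_def by blast
  have a: "br q x \<in> L" using x anti[of q x] by simp
  interpret pairL br L q x "br q x" using x a by unfold_locales auto
  have "br q x = 0" by (rule final)
  thus False using x anti[of x q] by simp
qed

theorem theorem2p2:
  fixes scale :: "'r::comm_ring_1 \<Rightarrow> 'q::ab_group_add \<Rightarrow> 'q"
    and br :: "'q \<Rightarrow> 'q \<Rightarrow> 'q"
    and L :: "'q set"
  assumes two_inv: "\<exists>u::'r. 2 * u = 1"
    and three_inv: "\<exists>v::'r. 3 * v = 1"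
    and Q_lie: "lie_algebra scale br"
    and L_sub: "lie_subalgebra scale br L"
    and weak: "weak_algebra_of_quotients br L"
    and L_snd: "strongly_non_degenerate br L"
  shows "strongly_non_degenerate br UNIV \<and> Ann br UNIV L = {0} \<and> QAnn br UNIV L = {0}"
proof -
  have M: "module scale" and LA: "\<forall>x y z. br (x + y) z = br x z + br y z"
    "\<forall>x y z. br x (y + z) = br x y + br x z" "\<forall>x. br x x = 0"
    "\<forall>x y z. br x (br y z) + br y (br z x) + br z (br x y) = 0"
    using Q_lie unfolding lie_algebra_def by auto
  interpret module scale by (rule M)
  have sub: "subspace L" and Lbr: "\<forall>x\<in>L. \<forall>y\<in>L. br x y \<in> L"
    using L_sub unfolding lie_subalgebra_def by auto
  obtain u2 :: 'r where u2: "2 * u2 = 1" using two_inv by blast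
  obtain u3 :: 'r where u3: "3 * u3 = 1" using three_inv by blast
  have half0: "v = 0" if "v + v = 0" for v :: 'q
  proof -
    have "v = scale (u2 * 2) v" using u2 by (simp add: mult.commute)
    also have "\<dots> = scale u2 (scale (1 + 1) v)" by (simp add: mult.commute)
    also have "scale (1 + 1) v = v + v" by (simp only: scale_left_distrib scale_one)
    finally show ?thesis using that by simp
  qed
  have third0: "v = 0" if "v + v + v = 0" for v :: 'q
  proof -
    have "v = scale (u3 * 3) v" using u3 by (simp add: mult.commute)
    also have "\<dots> = scale u3 (scale (1 + 1 + 1) v)" by (simp add: mult.commute)
    also have "scale (1 + 1 + 1) v = v + v + v" by (simp only: scale_left_distrib scale_one)
    finally show ?thesis using that by simp
  qed
  interpret lieL br L
  proof
    show "\<And>x. x \<in> L \<Longrightarrow> (\<And>v. v \<in> L \<Longrightarrow> br x (br x v) = 0) \<Longrightarrow> x = 0"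
      using L_snd unfolding strongly_non_degenerate_def absolute_zero_divisor_def by blast
    show "\<And>x y z. br (x + y) z = br x z + br y z" using LA(1) by blast
    show "\<And>x y z. br x (y + z) = br x y + br x z" using LA(2) by blast
    show "\<And>x. br x x = 0" using LA(3) by blast
    show "\<And>x y z. br x (br y z) + br y (br z x) + br z (br x y) = 0" using LA(4) by blast
    show "\<And>v::'q. v + v = 0 \<Longrightarrow> v = 0" by (rule half0)
    show "\<And>v::'q. v + v + v = 0 \<Longrightarrow> v = 0" by (rule third0)
    show "0 \<in> L" using sub by (rule subspace_0)
    show "\<And>u v. u \<in> L \<Longrightarrow> v \<in> L \<Longrightarrow> u + v \<in> L" using sub by (rule subspace_add)
    show "\<And>u. u \<in> L \<Longrightarrow> - u \<in> L" using sub by (rule subspace_neg)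
    show "\<And>u v. u \<in> L \<Longrightarrow> v \<in> L \<Longrightarrow> br u v \<in> L" using Lbr by blast
  qed
  have QA: "QAnn br UNIV L = {0}"
  proof
    show "QAnn br UNIV L \<subseteq> {0}"
    proof
      fix q assume "q \<in> QAnn br UNIV L"
      hence hq: "\<And>u. u \<in> L \<Longrightarrow> br q (br q u) = 0" unfolding QAnn_def by auto
      interpret lieQ br L q by unfold_locales (rule hq)
      show "q \<in> {0}" using qzero[OF weak] by simp
    qed
  qed (auto simp: QAnn_def)
  have AA: "Ann br UNIV L = {0}"
  proof
    show "Ann br UNIV L \<subseteq> {0}"
    proof
      fix q assume "q \<in> Ann br UNIV L"
      hence "q \<in> QAnn br UNIV L" unfolding Ann_def QAnn_def by auto
      thus "q \<in> {0}" using QA by simp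
    qed
  qed (auto simp: Ann_def)
  have "strongly_non_degenerate br UNIV"
    unfolding strongly_non_degenerate_def
  proof (intro allI impI)
    fix x assume "absolute_zero_divisor br UNIV x"
    hence "x \<in> QAnn br UNIV L" unfolding absolute_zero_divisor_def QAnn_def by auto
    thus "x = 0" using QA by simp
  qed
  thus ?thesis using QA AA by simp
qed

end
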